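(* Let $q \ge 2$ and $r \ge 3$ be integers. For $n \ge 1$ let $g^{q\text{-}\mathrm{ff}}_r(n)$ be the maximum cardinality of a family $\mathcal{F} \subseteq [q]^n$ containing no $q$-ary focal family of size $r$. Then there is a positive constant $c^{q\text{-}\mathrm{ff}}_r$ (depending only on $q$ and $r$) such that for every $n$, $$c^{q\text{-}\mathrm{ff}}_r \left(\frac{q}{((q-1)(r-1)+1)^{1/(r-1)}}\right)^n \le g^{q\text{-}\mathrm{ff}}_r(n) \le (r-1)\, q^{\lceil \frac{(r-2)n}{r-1} \rceil}.$$
   Context: Here $[q]=\{1,\dots,q\}$. A family $x^{(0)}, x^{(1)}, \dots, x^{(r-1)}$ of $r$ distinct vectors in $[q]^n$ is a ($q$-ary) focal family with focus $x^{(0)}$ if for every coordinate $i \in [n]$, at least $r-2$ of the $r-1$ entries $x^{(1)}_i, \dots, x^{(r-1)}_i$ are equal to $x^{(0)}_i$. A family contains a focal family of size $r$ if some $r$ distinct members, with some choice of focus among them, form a focal family. *)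

theory Defs
  imports Complex_Main
begin

definition cube :: "nat \<Rightarrow> nat \<Rightarrow> nat list set" where
  "cube q n = {x. length x = n \<and> set x \<subseteq> {1..q}}"

definition focal_family :: "nat \<Rightarrow> nat list set \<Rightarrow> nat list \<Rightarrow> bool" where
  "focal_family n S f \<longleftrightarrow> f \<in> S \<and> (\<forall>i<n. card {y \<in> S - {f}. y ! i = f ! i} \<ge> card S - 2)"

definition contains_focal :: "nat \<Rightarrow> nat \<Rightarrow> nat list set \<Rightarrow> bool" where
  "contains_focal n r F \<longleftrightarrow> (\<exists>S f. S \<subseteq> F \<and> card S = r \<and> focal_family n S f)"

definition g_ff :: "nat \<Rightarrow> nat \<Rightarrow> nat \<Rightarrow> nat" where
  "g_ff q r n = Max {card F | F. F \<subseteq> cube q n \<and> \<not> contains_focal n r F}"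

end

theory Submission
  imports Defs "HOL-Library.FuncSet"
begin

definition proj :: "nat \<Rightarrow> nat \<Rightarrow> nat \<Rightarrow> nat list \<Rightarrow> nat list" where
  "proj m j n x = map (\<lambda>i. x!i) (filter (\<lambda>i. i mod m \<noteq> j) [0..<n])"

lemma card_cube: "card (cube q n) = q ^ n"
proof -
  have "cube q n = {xs. set xs \<subseteq> {1..q} \<and> length xs = n}" unfolding cube_def by auto
  then show ?thesis using card_lists_length_eq[of "{1..q}" n] by simp
qed

lemma finite_cube: "finite (cube q n)"
proof -
  have "cube q n = {xs. set xs \<subseteq> {1..q} \<and> length xs = n}" unfolding cube_def by auto
  then show ?thesis using finite_lists_length_eq[of "{1..q}" n] by simp
qed

lemma proj_eq:
  assumes "proj m j n x = proj m j n y" "i < n" "i mod m \<noteq> j"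
  shows "x ! i = y ! i"
proof -
  have "i \<in> set (filter (\<lambda>i. i mod m \<noteq> j) [0..<n])" using assms by auto
  then show ?thesis using assms(1) unfolding proj_def by (simp add: map_eq_conv)
qed

lemma proj_len: "length (proj m j n x) = card {i. i < n \<and> i mod m \<noteq> j}"
  unfolding proj_def length_map length_filter_conv_card by (intro arg_cong[where f=card]) auto

lemma proj_set: "length x = n \<Longrightarrow> set (proj m j n x) \<subseteq> set x"
  unfolding proj_def by auto

lemma card_block:
  assumes "0 < m" "j < m"
  shows "card {i. i < n \<and> i mod m \<noteq> j} \<le> n - n div m"
proof -
  let ?f = "\<lambda>k. k * m + j"
  have sub: "?f ` {..<n div m} \<subseteq> {..<n}"
  proof
    fix x assume "x \<in> ?f ` {..<n div m}"
    then obtain k where k: "k < n div m" "x = k*m+j" by auto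
    have "k*m + j < k*m + m" using assms by simp
    also have "\<dots> = (k+1)*m" by simp
    also have "\<dots> \<le> (n div m) * m" using k by (intro mult_right_mono) auto
    also have "\<dots> \<le> n" by simp
    finally show "x \<in> {..<n}" using k by simp
  qed
  have inj: "inj_on ?f {..<n div m}" using assms by (intro inj_onI) simp
  have "{i. i < n \<and> i mod m \<noteq> j} \<subseteq> {..<n} - ?f ` {..<n div m}" using assms by auto
  then have "card {i. i < n \<and> i mod m \<noteq> j} \<le> card ({..<n} - ?f ` {..<n div m})"
    by (intro card_mono) auto
  also have "\<dots> = n - n div m" using sub inj by (simp add: card_Diff_subset card_image)
  finally show ?thesis .
qed

lemma upper:
  assumes r: "r \<ge> 3" and q: "q \<ge> 1" and FV: "F \<subseteq> cube q n" and nf: "\<not> contains_focal n r F"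
  shows "card F \<le> (r-1) * q ^ (n - n div (r-1))"
proof -
  define m where "m = r - 1"
  have m0: "0 < m" and rm: "r = Suc m" using r unfolding m_def by auto
  define G where "G j = {x\<in>F. \<forall>y\<in>F. proj m j n y = proj m j n x \<longrightarrow> y = x}" for j
  have lenF: "length x = n" if "x \<in> F" for x using FV that unfolding cube_def by auto
  have cov: "F \<subseteq> (\<Union>j<m. G j)"
  proof
    fix x assume xF: "x \<in> F"
    show "x \<in> (\<Union>j<m. G j)"
    proof (rule ccontr)
      assume "x \<notin> (\<Union>j<m. G j)"
      then have "\<forall>j<m. \<exists>y. y \<in> F \<and> proj m j n y = proj m j n x \<and> y \<noteq> x"
        using xF unfolding G_def by blast
      then obtain Y where Y: "\<And>j. j < m \<Longrightarrow> Y j \<in> F \<and> proj m j n (Y j) = proj m j n x \<and> Y j \<noteq> x"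
        by metis
      have agree: "Y j ! i = x ! i" if "j < m" "i < n" "i mod m \<noteq> j" for i j
        using proj_eq[of m j n "Y j" x i] Y[OF that(1)] that by auto
      have inj: "inj_on Y {..<m}"
      proof (rule inj_onI)
        fix j j' assume jj: "j \<in> {..<m}" "j' \<in> {..<m}" "Y j = Y j'"
        show "j = j'"
        proof (rule ccontr)
          assume ne: "j \<noteq> j'"
          have "Y j = x"
          proof (rule nth_equalityI)
            show "length (Y j) = length x" using lenF xF Y jj by auto
            fix i assume "i < length (Y j)"
            then have i: "i < n" using lenF Y jj by auto
            show "Y j ! i = x ! i"
            proof (cases "i mod m = j")
              case True
              then show ?thesis using agree[of j' i] jj ne i by auto
            next
              case False
              then show ?thesis using agree[of j i] jj i by auto
            qed
          qed
          then show False using Y jj by auto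
        qed
      qed
      define S where "S = insert x (Y ` {..<m})"
      have xnot: "x \<notin> Y ` {..<m}" using Y by auto
      have cardS: "card S = r" unfolding S_def using xnot inj rm by (simp add: card_image)
      have SF: "S \<subseteq> F" unfolding S_def using xF Y by auto
      have "focal_family n S x"
        unfolding focal_family_def
      proof (intro conjI allI impI)
        show "x \<in> S" unfolding S_def by simp
        fix i assume i: "i < n"
        have "Y ` ({..<m} - {i mod m}) \<subseteq> {y \<in> S - {x}. y ! i = x ! i}"
          using agree i xnot unfolding S_def by auto
        then have "card (Y ` ({..<m} - {i mod m})) \<le> card {y \<in> S - {x}. y ! i = x ! i}"
          by (intro card_mono) (auto simp: S_def)
        moreover have "card (Y ` ({..<m} - {i mod m})) = m - 1"
          using inj m0 by (subst card_image) (auto intro: inj_on_subset)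
        ultimately show "card S - 2 \<le> card {y \<in> S - {x}. y ! i = x ! i}"
          using cardS rm by simp
      qed
      then show False using nf SF cardS unfolding contains_focal_def by blast
    qed
  qed
  have cardG: "card (G j) \<le> q ^ (n - n div m)" if j: "j < m" for j
  proof -
    have inj: "inj_on (proj m j n) (G j)" unfolding G_def by (intro inj_onI) auto
    define L where "L = card {i. i < n \<and> i mod m \<noteq> j}"
    have "proj m j n ` G j \<subseteq> {xs. set xs \<subseteq> {1..q} \<and> length xs = L}"
    proof
      fix z assume "z \<in> proj m j n ` G j"
      then obtain x where x: "x \<in> F" "z = proj m j n x" unfolding G_def by auto
      have "set x \<subseteq> {1..q}" using FV x unfolding cube_def by auto
      then show "z \<in> {xs. set xs \<subseteq> {1..q} \<and> length xs = L}"
        using proj_set[OF lenF[OF x(1)], of m j] x proj_len[of m j n x] L_def by auto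
    qed
    then have "card (proj m j n ` G j) \<le> card {xs. set xs \<subseteq> {1..q} \<and> length xs = L}"
      by (intro card_mono) (auto intro: finite_lists_length_eq)
    also have "\<dots> = q ^ L" by (simp add: card_lists_length_eq)
    also have "\<dots> \<le> q ^ (n - n div m)"
    proof (cases "q = 0")
      case True then show ?thesis using q by simp
    next
      case False
      then show ?thesis using card_block[OF m0 j, of n] L_def by (intro power_increasing) auto
    qed
    finally show ?thesis using inj by (simp add: card_image)
  qed
  have finG: "finite (G j)" for j
    using finite_subset[OF FV finite_cube] unfolding G_def by auto
  have "card F \<le> card (\<Union>j<m. G j)" using cov finG by (intro card_mono) auto
  also have "\<dots> \<le> (\<Sum>j<m. card (G j))" by (rule card_UN_le) simp
  also have "\<dots> \<le> (\<Sum>j<m. q ^ (n - n div m))" by (intro sum_mono cardG) simp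
  also have "\<dots> = m * q ^ (n - n div m)" by simp
  finally show ?thesis unfolding m_def .
qed

lemma binom_ratio:
  "r \<le> k \<Longrightarrow> k \<le> N \<Longrightarrow> ((N - r) choose (k - r)) * N ^ r \<le> (N choose k) * k ^ r"
proof (induction r arbitrary: N k)
  case 0
  then show ?case by simp
next
  case (Suc r)
  obtain N' k' where NK: "N = Suc N'" "k = Suc k'" using Suc.prems
    by (metis Suc_le_D le_trans)
  have rk: "r \<le> k'" "k' \<le> N'" using Suc.prems NK by auto
  have IH: "((N' - r) choose (k' - r)) * N' ^ r \<le> (N' choose k') * k' ^ r"
    using Suc.IH[OF rk] .
  define B where "B = (N' - r) choose (k' - r)"
  have eq: "(N choose k) * k = N * (N' choose k')"
    using Suc_times_binomial_eq[of N' k'] NK by simp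
  have key: "B * N ^ r \<le> (N' choose k') * k ^ r"
  proof (cases "N' = 0")
    case True
    then have "r = 0" "k' = 0" using rk by auto
    then show ?thesis using True B_def by simp
  next
    case False
    have "B * N ^ r * N' ^ r = (B * N' ^ r) * N ^ r" by simp
    also have "\<dots> \<le> ((N' choose k') * k' ^ r) * N ^ r"
      using IH B_def by (intro mult_right_mono) auto
    also have "\<dots> = (N' choose k') * (k' * N) ^ r" by (simp add: power_mult_distrib)
    also have "\<dots> \<le> (N' choose k') * (k * N') ^ r"
    proof -
      have "k' * N \<le> k * N'" using rk NK by (simp add: algebra_simps)
      then show ?thesis by (intro mult_left_mono power_mono) auto
    qed
    also have "\<dots> = (N' choose k') * k ^ r * N' ^ r" by (simp add: power_mult_distrib)
    finally show ?thesis using False by simp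
  qed
  have "((N - Suc r) choose (k - Suc r)) * N ^ Suc r = B * N ^ r * N"
    using NK B_def by (simp add: algebra_simps)
  also have "\<dots> \<le> (N' choose k') * k ^ r * N" using key by (intro mult_right_mono) auto
  also have "\<dots> = (N choose k) * k ^ Suc r" using eq by (simp add: algebra_simps)
  finally show ?case .
qed

lemma count_supersets:
  assumes "finite V" "S \<subseteq> V" "card S = r" "r \<le> k"
  shows "card {A. (A \<subseteq> V \<and> card A = k) \<and> S \<subseteq> A} = (card V - r) choose (k - r)"
proof -
  have finS: "finite S" using assms finite_subset by blast
  have "{A. (A \<subseteq> V \<and> card A = k) \<and> S \<subseteq> A} = (\<lambda>B. B \<union> S) ` {B. B \<subseteq> V - S \<and> card B = k - r}"
  proof (intro equalityI subsetI)
    fix A assume A: "A \<in> {A. (A \<subseteq> V \<and> card A = k) \<and> S \<subseteq> A}"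
    then have "A - S \<in> {B. B \<subseteq> V - S \<and> card B = k - r}"
      using assms finS by (auto simp: card_Diff_subset)
    moreover have "A = (A - S) \<union> S" using A by auto
    ultimately show "A \<in> (\<lambda>B. B \<union> S) ` {B. B \<subseteq> V - S \<and> card B = k - r}" by blast
  next
    fix A assume "A \<in> (\<lambda>B. B \<union> S) ` {B. B \<subseteq> V - S \<and> card B = k - r}"
    then obtain B where B: "B \<subseteq> V - S" "card B = k - r" "A = B \<union> S" by auto
    have "finite B" using B assms finite_subset by blast
    then have "card A = k" using B assms finS by (subst B(3), subst card_Un_disjoint) auto
    then show "A \<in> {A. (A \<subseteq> V \<and> card A = k) \<and> S \<subseteq> A}" using B assms by auto
  qed
  moreover have "inj_on (\<lambda>B. B \<union> S) {B. B \<subseteq> V - S \<and> card B = k - r}"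
    by (intro inj_onI) blast
  ultimately have "card {A. (A \<subseteq> V \<and> card A = k) \<and> S \<subseteq> A} = card {B. B \<subseteq> V - S \<and> card B = k - r}"
    by (simp add: card_image)
  also have "\<dots> = card (V - S) choose (k - r)" using assms by (intro n_subsets) auto
  also have "card (V - S) = card V - r" using assms finS by (simp add: card_Diff_subset)
  finally show ?thesis .
qed

lemma averaging:
  assumes V: "finite V" and E: "finite E" "\<And>S. S \<in> E \<Longrightarrow> S \<subseteq> V \<and> card S = r"
    and rk: "r \<le> k" and kV: "k \<le> card V"
  shows "\<exists>A. A \<subseteq> V \<and> card A = k \<and> card {S\<in>E. S \<subseteq> A} * (card V choose k) \<le> card E * ((card V - r) choose (k - r))"
proof -
  define X where "X = {A. A \<subseteq> V \<and> card A = k}"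
  define h where "h A = card {S\<in>E. S \<subseteq> A}" for A
  have cX: "card X = card V choose k" unfolding X_def using V by (rule n_subsets)
  have finX: "finite X" unfolding X_def using V by auto
  have neX: "X \<noteq> {}" using cX kV by auto
  have hs: "h A = (\<Sum>S\<in>E. if S \<subseteq> A then 1 else 0)" for A
    unfolding h_def using E(1) by (simp add: sum.inter_filter[symmetric])
  have "(\<Sum>A\<in>X. h A) = (\<Sum>S\<in>E. \<Sum>A\<in>X. if S \<subseteq> A then 1 else 0)"
    unfolding hs by (rule sum.swap)
  also have "\<dots> = (\<Sum>S\<in>E. card {A\<in>X. S \<subseteq> A})"
    using finX by (simp add: sum.inter_filter[symmetric])
  also have "\<dots> = (\<Sum>S\<in>E. (card V - r) choose (k - r))"
  proof (intro sum.cong refl)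
    fix S assume "S \<in> E"
    then show "card {A\<in>X. S \<subseteq> A} = (card V - r) choose (k - r)"
      using count_supersets[of V S r k] E(2) V rk unfolding X_def by simp
  qed
  also have "\<dots> = card E * ((card V - r) choose (k - r))" by simp
  finally have sumeq: "(\<Sum>A\<in>X. h A) = card E * ((card V - r) choose (k - r))" .
  define m0 where "m0 = Min (h ` X)"
  have "m0 \<in> h ` X" unfolding m0_def using finX neX by (intro Min_in) auto
  then obtain A where A: "A \<in> X" "h A = m0" by auto
  have "card X * m0 \<le> (\<Sum>A\<in>X. h A)"
    using sum_bounded_below[of X m0 h] finX unfolding m0_def by simp
  then show ?thesis using A sumeq cX unfolding X_def h_def by (auto simp: mult.commute)
qed

definition edges :: "nat \<Rightarrow> nat \<Rightarrow> nat \<Rightarrow> nat list set set" where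
  "edges q n r = {S. S \<subseteq> cube q n \<and> card S = r \<and> (\<exists>f. focal_family n S f)}"

lemma deletion:
  assumes A: "A \<subseteq> cube q n" and r: "r \<ge> 1"
  shows "\<exists>A'. A' \<subseteq> cube q n \<and> \<not> contains_focal n r A' \<and> card A \<le> card A' + card {S\<in>edges q n r. S \<subseteq> A}"
proof -
  define B where "B = {S\<in>edges q n r. S \<subseteq> A}"
  define P where "P = (\<lambda>S. SOME x. x \<in> S) ` B"
  have finA: "finite A" using A finite_cube finite_subset by blast
  have finB: "finite B"
  proof (rule finite_subset)
    show "B \<subseteq> Pow A" unfolding B_def by auto
  qed (use finA in auto)
  have "card P \<le> card B" unfolding P_def using finB by (rule card_image_le)
  moreover have "card A - card P \<le> card (A - P)"
    using finB P_def by (intro diff_card_le_card_Diff) auto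
  moreover have "\<not> contains_focal n r (A - P)"
  proof
    assume "contains_focal n r (A - P)"
    then obtain S f where S: "S \<subseteq> A - P" "card S = r" "focal_family n S f"
      unfolding contains_focal_def by blast
    have "S \<in> B" unfolding B_def edges_def using S A by auto
    have "S \<noteq> {}" using S r by auto
    then have "(SOME x. x \<in> S) \<in> S" by (meson ex_in_conv someI_ex)
    moreover have "(SOME x. x \<in> S) \<in> P" unfolding P_def using \<open>S \<in> B\<close> by auto
    ultimately show False using S by auto
  qed
  ultimately show ?thesis using A unfolding B_def
    by (intro exI[of _ "A - P"]) auto
qed

definition cols :: "nat \<Rightarrow> nat \<Rightarrow> nat list set" where
  "cols q r = {col. length col = r \<and> set col \<subseteq> {1..q} \<and> card {j. j < r - 1 \<and> col ! Suc j \<noteq> col ! 0} \<le> 1}"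

lemma finite_cols: "finite (cols q r)"
proof (rule finite_subset)
  show "cols q r \<subseteq> {xs. set xs \<subseteq> {1..q} \<and> length xs = r}" unfolding cols_def by auto
qed (rule finite_lists_length_eq, simp)

lemma card_cols:
  assumes r: "r \<ge> 1"
  shows "card (cols q r) \<le> q * ((q - 1) * (r - 1) + 1)"
proof -
  define I where "I a = (\<Union>j\<in>{..<r-1}. (\<lambda>v. (replicate r a)[Suc j := v]) ` ({1..q} - {a}))" for a
  define U where "U = (\<Union>a\<in>{1..q}. insert (replicate r a) (I a))"
  have sub: "cols q r \<subseteq> U"
  proof
    fix col assume c: "col \<in> cols q r"
    define a where "a = col ! 0"
    have len: "length col = r" and set: "set col \<subseteq> {1..q}" using c unfolding cols_def by auto
    have "col ! 0 \<in> set col" using len r by simp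
    then have a: "a \<in> {1..q}" unfolding a_def using set by blast
    define J where "J = {j. j < r - 1 \<and> col ! Suc j \<noteq> a}"
    have cJ: "card J \<le> 1" using c unfolding cols_def J_def a_def by auto
    have finJ: "finite J" unfolding J_def by auto
    show "col \<in> U"
    proof (cases "J = {}")
      case True
      have "col = replicate r a"
      proof (rule nth_equalityI)
        show "length col = length (replicate r a)" using len by simp
        fix i assume "i < length col"
        then show "col ! i = replicate r a ! i"
          using True len unfolding J_def a_def by (cases i) auto
      qed
      then show ?thesis unfolding U_def using a by auto
    next
      case False
      then obtain j where j: "j \<in> J" by auto
      have Jj: "\<forall>j'\<in>J. j' = j" using cJ finJ j card_le_Suc0_iff_eq[OF finJ] by auto
      have "Suc j < length col" using j len r unfolding J_def by auto
      then have "col ! Suc j \<in> set col" by (rule nth_mem)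
      then have v: "col ! Suc j \<in> {1..q} - {a}" using j set unfolding J_def by blast
      have "col = (replicate r a)[Suc j := col ! Suc j]"
      proof (rule nth_equalityI)
        show "length col = length ((replicate r a)[Suc j := col ! Suc j])" using len by simp
        fix i assume i: "i < length col"
        show "col ! i = (replicate r a)[Suc j := col ! Suc j] ! i"
        proof (cases i)
          case 0 then show ?thesis using len i a_def by (simp add: nth_list_update)
        next
          case (Suc i')
          have "i' < r - 1" using Suc i len by simp
          then have "i' = j \<or> col ! Suc i' = a" using Jj unfolding J_def by blast
          then show ?thesis using Suc i len by (cases "i' = j") (auto simp: nth_list_update)
        qed
      qed
      then have "col \<in> I a" unfolding I_def using j v unfolding J_def by blast
      then show ?thesis unfolding U_def using a by auto
    qed
  qed
  have cI: "card (I a) \<le> (q - 1) * (r - 1)" if a: "a \<in> {1..q}" for a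
  proof -
    have "card (I a) \<le> (\<Sum>j<r-1. card ((\<lambda>v. (replicate r a)[Suc j := v]) ` ({1..q} - {a})))"
      unfolding I_def by (rule card_UN_le) simp
    also have "\<dots> \<le> (\<Sum>j<r-1. q - 1)"
    proof (intro sum_mono)
      fix j
      have "card ((\<lambda>v. (replicate r a)[Suc j := v]) ` ({1..q} - {a})) \<le> card ({1..q} - {a})"
        by (rule card_image_le) simp
      also have "\<dots> = q - 1" using a by simp
      finally show "card ((\<lambda>v. (replicate r a)[Suc j := v]) ` ({1..q} - {a})) \<le> q - 1" .
    qed
    also have "\<dots> = (q - 1) * (r - 1)" by simp
    finally show ?thesis .
  qed
  have finI: "finite (I a)" for a unfolding I_def by auto
  have "card (cols q r) \<le> card U" using sub unfolding U_def I_def by (intro card_mono) auto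
  also have "\<dots> \<le> (\<Sum>a\<in>{1..q}. card (insert (replicate r a) (I a)))" unfolding U_def by (rule card_UN_le) simp
  also have "\<dots> \<le> (\<Sum>a\<in>{1..q}. (q - 1) * (r - 1) + 1)"
  proof (intro sum_mono)
    fix a assume a: "a \<in> {1..q}"
    have "card (insert (replicate r a) (I a)) \<le> card (I a) + 1" using finI by (simp add: card_insert_if)
    then show "card (insert (replicate r a) (I a)) \<le> (q - 1) * (r - 1) + 1" using cI[OF a] by simp
  qed
  also have "\<dots> = q * ((q - 1) * (r - 1) + 1)" by simp
  finally show ?thesis .
qed

lemma card_edges:
  assumes r: "r \<ge> 2"
  shows "card (edges q n r) \<le> card (cols q r) ^ n"
proof -
  define P where "P = Pi\<^sub>E {..<n} (\<lambda>_. cols q r)"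
  define \<Phi> where "\<Phi> g = set (map (\<lambda>j. map (\<lambda>i. g i ! j) [0..<n]) [0..<r])" for g :: "nat \<Rightarrow> nat list"
  have finP: "finite P" unfolding P_def using finite_cols by (intro finite_PiE) auto
  have cP: "card P = card (cols q r) ^ n" unfolding P_def by (simp add: card_PiE)
  have sub: "edges q n r \<subseteq> \<Phi> ` P"
  proof
    fix S assume S: "S \<in> edges q n r"
    then obtain f where f: "f \<in> S" "\<And>i. i < n \<Longrightarrow> card {y \<in> S - {f}. y ! i = f ! i} \<ge> card S - 2"
      unfolding edges_def focal_family_def by blast
    have Scube: "S \<subseteq> cube q n" and cS: "card S = r" using S unfolding edges_def by auto
    have finS: "finite S" using Scube finite_cube finite_subset by blast
    obtain ys where ys: "set ys = S - {f}" "distinct ys" using finS finite_distinct_list[of "S - {f}"] by auto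
    have lys: "length ys = r - 1" using ys cS f finS distinct_card[OF ys(2)] by simp
    define zs where "zs = f # ys"
    have lzs: "length zs = r" using lys r zs_def by simp
    have szs: "set zs = S" using ys f zs_def by auto
    have lenv: "length v = n" "set v \<subseteq> {1..q}" if "v \<in> S" for v using that Scube unfolding cube_def by auto
    define g where "g = (\<lambda>i\<in>{..<n}. map (\<lambda>v. v ! i) zs)"
    have gP: "g \<in> P" unfolding P_def g_def
    proof (subst restrict_PiE, intro Pi_I)
      fix i assume i: "i \<in> {..<n}"
      let ?c = "map (\<lambda>v. v ! i) zs"
      have l: "length ?c = r" using lzs by simp
      have s: "set ?c \<subseteq> {1..q}"
      proof
        fix x assume "x \<in> set ?c"
        then obtain v where v: "v \<in> S" "x = v ! i" using szs by auto
        have "v ! i \<in> set v" using lenv(1)[OF v(1)] i by simp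
        then show "x \<in> {1..q}" using lenv(2)[OF v(1)] v(2) by blast
      qed
      define K where "K = {j. j < r - 1 \<and> ?c ! Suc j \<noteq> ?c ! 0}"
      have K: "K = {j. j < r - 1 \<and> ys ! j ! i \<noteq> f ! i}" unfolding K_def zs_def using lys by auto
      have "(!) ys ` K = {y \<in> set ys. y ! i \<noteq> f ! i}" unfolding K lys[symmetric]
        by (auto simp: in_set_conv_nth)
      moreover have "inj_on ((!) ys) K" using ys(2) unfolding K lys[symmetric] by (intro inj_onI) (simp add: nth_eq_iff_index_eq)
      ultimately have cK: "card K = card {y \<in> set ys. y ! i \<noteq> f ! i}" by (metis card_image)
      have "{y \<in> set ys. y ! i \<noteq> f ! i} = set ys - {y \<in> set ys. y ! i = f ! i}" by auto
      then have "card {y \<in> set ys. y ! i \<noteq> f ! i} = card (set ys) - card {y \<in> set ys. y ! i = f ! i}"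
        by (simp add: card_Diff_subset)
      moreover have "card (set ys) = r - 1" using lys distinct_card[OF ys(2)] by simp
      moreover have "card {y \<in> set ys. y ! i = f ! i} \<ge> r - 2" using f(2)[of i] i ys cS by simp
      ultimately have "card K \<le> 1" using cK r by linarith
      then show "?c \<in> cols q r" using l s unfolding cols_def K_def by auto
    qed
    have "\<Phi> g = set (map (\<lambda>j. zs ! j) [0..<r])"
      unfolding \<Phi>_def
    proof (intro arg_cong[where f=set] map_cong refl)
      fix j assume "j \<in> set [0..<r]"
      then have j: "j < r" by simp
      have zj: "zs ! j \<in> S" using j lzs szs nth_mem by blast
      show "map (\<lambda>i. g i ! j) [0..<n] = zs ! j"
      proof (rule nth_equalityI)
        show "length (map (\<lambda>i. g i ! j) [0..<n]) = length (zs ! j)" using lenv[OF zj] by simp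
        fix i assume "i < length (map (\<lambda>i. g i ! j) [0..<n])"
        then have i: "i < n" by simp
        then show "map (\<lambda>i. g i ! j) [0..<n] ! i = zs ! j ! i" unfolding g_def using j lzs by simp
      qed
    qed
    also have "\<dots> = set zs" using lzs by (metis map_nth)
    finally have "\<Phi> g = S" using szs by simp
    then show "S \<in> \<Phi> ` P" using gP by blast
  qed
  have "card (edges q n r) \<le> card (\<Phi> ` P)" using sub finP by (intro card_mono) auto
  also have "\<dots> \<le> card P" using finP by (rule card_image_le)
  finally show ?thesis using cP by simp
qed

lemma g_ff_props:
  assumes r: "r \<ge> 1"
  shows "\<exists>F. F \<subseteq> cube q n \<and> \<not> contains_focal n r F \<and> g_ff q r n = card F"
    and "F \<subseteq> cube q n \<Longrightarrow> \<not> contains_focal n r F \<Longrightarrow> card F \<le> g_ff q r n"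
proof -
  define Sg where "Sg = {card F | F. F \<subseteq> cube q n \<and> \<not> contains_focal n r F}"
  have "Sg \<subseteq> card ` Pow (cube q n)" unfolding Sg_def by blast
  then have fin: "finite Sg" using finite_cube by (meson finite_Pow_iff finite_imageI finite_subset)
  have "\<not> contains_focal n r {}" using r unfolding contains_focal_def by auto
  then have ne: "Sg \<noteq> {}" unfolding Sg_def by blast
  have g: "g_ff q r n = Max Sg" unfolding g_ff_def Sg_def by simp
  have "Max Sg \<in> Sg" using fin ne by (rule Max_in)
  then show "\<exists>F. F \<subseteq> cube q n \<and> \<not> contains_focal n r F \<and> g_ff q r n = card F"
    unfolding g Sg_def by blast
  assume "F \<subseteq> cube q n" "\<not> contains_focal n r F"
  then have "card F \<in> Sg" unfolding Sg_def by blast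
  then show "card F \<le> g_ff q r n" unfolding g using fin by (simp add: Max_ge)
qed

lemma cf_sub: "contains_focal n r F \<Longrightarrow> \<exists>S. S \<subseteq> F \<and> card S = r"
  unfolding contains_focal_def by blast

lemma g_ge1:
  assumes r: "r \<ge> 2" and q: "q \<ge> 1"
  shows "1 \<le> g_ff q r n"
proof -
  have "set (replicate n (1::nat)) \<subseteq> {1..q}" using q by auto
  then have "replicate n (1::nat) \<in> cube q n" unfolding cube_def by simp
  then have sub: "{replicate n (1::nat)} \<subseteq> cube q n" by simp
  have nf: "\<not> contains_focal n r {replicate n (1::nat)}"
  proof
    assume "contains_focal n r {replicate n (1::nat)}"
    then have "\<exists>S. S \<subseteq> {replicate n (1::nat)} \<and> card S = r" by (rule cf_sub)
    then obtain S where S: "S \<subseteq> {replicate n (1::nat)}" "card S = r" by (elim exE conjE)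
    then have "card S \<le> card {replicate n (1::nat)}" by (intro card_mono) auto
    then have "card S \<le> 1" by simp
    then show False using r S(2) by simp
  qed
  have r1: "r \<ge> 1" using r by simp
  have "card {replicate n (1::nat)} \<le> g_ff q r n" by (rule g_ff_props(2)[OF r1 sub nf])
  then show ?thesis by simp
qed

lemma ceil_bound:
  assumes r: "r \<ge> 3"
  shows "n - n div (r-1) \<le> nat \<lceil>real ((r - 2) * n) / real (r - 1)\<rceil>"
proof -
  define m where "m = r - 1"
  have m: "m \<ge> 2" "r - 2 = m - 1" using r m_def by auto
  have e: "real ((r - 2) * n) / real (r - 1) = real n - real n / real m"
    using m unfolding m_def[symmetric] by (simp add: of_nat_diff field_simps)
  have "n = n div m * m + n mod m" by simp
  moreover have "n mod m < m" using m by simp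
  ultimately have "n < n div m * m + m" by linarith
  then have "n < (n div m + 1) * m" by (simp add: algebra_simps)
  then have "real n < (real (n div m) + 1) * real m" by (metis of_nat_1 of_nat_add of_nat_less_iff of_nat_mult)
  then have lt: "real n / real m < real (n div m) + 1" using m by (simp add: divide_less_eq)
  have "int (n - n div m) \<le> \<lceil>real n - real n / real m\<rceil>"
    unfolding le_ceiling_iff using lt by (simp add: of_nat_diff div_le_dividend)
  then have "int (n - n div m) \<le> \<lceil>real ((r - 2) * n) / real (r - 1)\<rceil>" using e by simp
  then show ?thesis unfolding m_def by (simp add: le_nat_iff)
qed

lemma exists_good_A:
  assumes r: "r \<ge> 3" and kN: "k \<le> q ^ n"
  shows "\<exists>A. A \<subseteq> cube q n \<and> card A = k \<and>
     card {S\<in>edges q n r. S \<subseteq> A} * (q ^ n) ^ r \<le> card (edges q n r) * k ^ r"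
proof (cases "r \<le> k")
  case True
  define N where "N = q ^ n"
  have cV: "card (cube q n) = N" unfolding N_def by (rule card_cube)
  have finE: "finite (edges q n r)"
  proof (rule finite_subset)
    show "edges q n r \<subseteq> Pow (cube q n)" unfolding edges_def by auto
  qed (simp add: finite_cube)
  have Eprop: "\<And>S. S \<in> edges q n r \<Longrightarrow> S \<subseteq> cube q n \<and> card S = r" unfolding edges_def by auto
  obtain A where A: "A \<subseteq> cube q n" "card A = k"
    "card {S\<in>edges q n r. S \<subseteq> A} * (N choose k) \<le> card (edges q n r) * ((N - r) choose (k - r))"
    using averaging[OF finite_cube finE Eprop True] kN cV N_def by auto
  define b where "b = card {S\<in>edges q n r. S \<subseteq> A}"
  define e where "e = card (edges q n r)"
  have bin: "((N - r) choose (k - r)) * N ^ r \<le> (N choose k) * k ^ r"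
    using binom_ratio[OF True] kN N_def by simp
  have "b * N ^ r * (N choose k) = (b * (N choose k)) * N ^ r" by simp
  also have "\<dots> \<le> (e * ((N - r) choose (k - r))) * N ^ r"
    using A(3) b_def e_def by (intro mult_right_mono) auto
  also have "\<dots> = e * (((N - r) choose (k - r)) * N ^ r)" by simp
  also have "\<dots> \<le> e * ((N choose k) * k ^ r)" using bin by (intro mult_left_mono) auto
  also have "\<dots> = e * k ^ r * (N choose k)" by simp
  finally have "b * N ^ r \<le> e * k ^ r"
    using kN N_def by (metis mult_le_cancel2 zero_less_binomial)
  then show ?thesis using A b_def e_def N_def by blast
next
  case False
  have "k \<le> card (cube q n)" using kN by (simp add: card_cube)
  then obtain A where A: "A \<subseteq> cube q n" "card A = k" "finite A" by (rule obtain_subset_with_card_n)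
  have "{S\<in>edges q n r. S \<subseteq> A} = {}"
  proof (rule ccontr)
    assume "{S\<in>edges q n r. S \<subseteq> A} \<noteq> {}"
    then obtain S where "S \<in> edges q n r" "S \<subseteq> A" by blast
    then have "card S = r" "card S \<le> card A" using A(3) unfolding edges_def by (auto intro: card_mono)
    then show False using False A(2) by simp
  qed
  then have "card {S\<in>edges q n r. S \<subseteq> A} = 0" by (metis card.empty)
  then have "card {S\<in>edges q n r. S \<subseteq> A} * (q ^ n) ^ r \<le> card (edges q n r) * k ^ r" by simp
  then show ?thesis using A by blast
qed

lemma lower:
  assumes q: "q \<ge> 2" and r: "r \<ge> 3"
  shows "(1/8) * (real q / (real ((q - 1) * (r - 1) + 1)) powr (1 / real (r - 1))) ^ n \<le> real (g_ff q r n)"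
proof -
  define M where "M = (q - 1) * (r - 1) + 1"
  define m where "m = r - 1"
  have M1: "M \<ge> 1" unfolding M_def by simp
  have m2: "m \<ge> 2" and rm: "r = Suc m" using r unfolding m_def by auto
  define t where "t = real M powr (1 / real m)"
  have t1: "t \<ge> 1" unfolding t_def using M1 by (intro ge_one_powr_ge_zero) auto
  define \<alpha> where "\<alpha> = real q / t"
  have apos: "\<alpha> > 0" unfolding \<alpha>_def using q t1 by simp
  have aq: "\<alpha> \<le> real q" unfolding \<alpha>_def using t1 q by (simp add: divide_le_eq)
  have tm: "t ^ m = real M"
  proof -
    have "t ^ m = t powr real m" unfolding t_def using M1 by (simp add: powr_realpow)
    also have "\<dots> = real M powr (1 / real m * real m)" unfolding t_def by (rule powr_powr)
    also have "\<dots> = real M" using m2 M1 by simp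
    finally show ?thesis .
  qed
  have am: "\<alpha> ^ m = real q ^ m / real M" unfolding \<alpha>_def by (simp add: power_divide tm)
  define a where "a = \<alpha> ^ n"
  have a0: "a \<ge> 0" unfolding a_def using apos by simp
  have aN: "a \<le> real q ^ n" unfolding a_def using apos aq by (intro power_mono) auto
  have apm: "a ^ m = (real q ^ n) ^ m / real M ^ n"
  proof -
    have "a ^ m = (\<alpha> ^ m) ^ n" unfolding a_def by (simp add: power_mult[symmetric] mult.commute)
    also have "\<dots> = (real q ^ m) ^ n / real M ^ n" by (simp add: am power_divide)
    also have "(real q ^ m) ^ n = (real q ^ n) ^ m" by (simp add: power_mult[symmetric] mult.commute)
    finally show ?thesis .
  qed
  define k where "k = nat \<lfloor>a / 2\<rfloor>"
  have k1: "real k \<le> a / 2" unfolding k_def using a0 by linarith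
  have k2: "a / 2 < real k + 1" unfolding k_def using a0 by linarith
  have "real k \<le> real q ^ n" using k1 aN a0 by linarith
  then have kN: "k \<le> q ^ n" by (metis of_nat_le_iff of_nat_power)
  obtain A where A: "A \<subseteq> cube q n" "card A = k"
    "card {S\<in>edges q n r. S \<subseteq> A} * (q ^ n) ^ r \<le> card (edges q n r) * k ^ r"
    using exists_good_A[OF r kN] by blast
  define b where "b = card {S\<in>edges q n r. S \<subseteq> A}"
  have cE: "card (edges q n r) \<le> (q * M) ^ n"
  proof -
    have "card (edges q n r) \<le> card (cols q r) ^ n" using r by (intro card_edges) auto
    also have "\<dots> \<le> (q * M) ^ n" using card_cols[of r q] r unfolding M_def by (intro power_mono) auto
    finally show ?thesis .
  qed
  have "b * (q ^ n) ^ r \<le> (q * M) ^ n * k ^ r"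
    using A(3) cE b_def by (meson le_trans mult_le_mono1)
  then have bR: "real b * (real q ^ n) ^ r \<le> (real q * real M) ^ n * real k ^ r"
    by (metis of_nat_le_iff of_nat_mult of_nat_power)
  have km: "real k ^ m \<le> (real q ^ n) ^ m / (2 * real M ^ n)"
  proof -
    have "real k ^ m \<le> (a / 2) ^ m" using k1 by (intro power_mono) auto
    also have "\<dots> = a ^ m / 2 ^ m" by (simp add: power_divide)
    also have "\<dots> \<le> a ^ m / 2"
    proof -
      have "(2::real) \<le> 2 ^ m" using m2 by (metis power_one_right power_increasing one_le_numeral
            order_trans one_le_numeral Suc_1 Suc_leD)
      then show ?thesis using a0 by (intro divide_left_mono) auto
    qed
    also have "\<dots> = (real q ^ n) ^ m / (2 * real M ^ n)" using apm by simp
    finally show ?thesis .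
  qed
  have Mpos: "real M ^ n > 0" using M1 by simp
  have Qpos: "(real q ^ n) ^ r > 0" using q by simp
  have "(real q * real M) ^ n * real k ^ r = real q ^ n * real M ^ n * real k * real k ^ m"
    using rm by (simp add: power_mult_distrib)
  also have "\<dots> \<le> real q ^ n * real M ^ n * real k * ((real q ^ n) ^ m / (2 * real M ^ n))"
    using km by (intro mult_left_mono) auto
  also have "\<dots> = real k * (real q ^ n) ^ r / 2"
    using Mpos M1 rm by (simp add: field_simps)
  finally have "real b * (real q ^ n) ^ r \<le> (real k / 2) * (real q ^ n) ^ r" using bR by simp
  then have bk: "real b \<le> real k / 2" using Qpos by simp
  obtain A' where A': "A' \<subseteq> cube q n" "\<not> contains_focal n r A'" "card A \<le> card A' + b"
    using deletion[OF A(1), of r] r b_def by auto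
  have gA: "card A' \<le> g_ff q r n" using g_ff_props(2)[of r A' q n] A' r by simp
  have gk: "real k / 2 \<le> real (g_ff q r n)" using A(2) A'(3) gA bk by linarith
  have g1: "1 \<le> real (g_ff q r n)" using g_ge1[of r q n] r q by simp
  show ?thesis
  proof (cases "a \<ge> 4")
    case True
    then show ?thesis using gk k2 unfolding a_def \<alpha>_def t_def M_def m_def by linarith
  next
    case False
    then show ?thesis using g1 unfolding a_def \<alpha>_def t_def M_def m_def by linarith
  qed
qed

theorem theorem3p1:
  fixes q r :: nat
  assumes "q \<ge> 2" and "r \<ge> 3"
  shows "\<exists>c::real. c > 0 \<and> (\<forall>n\<ge>1.
     c * (real q / (real ((q - 1) * (r - 1) + 1)) powr (1 / real (r - 1))) ^ n \<le> real (g_ff q r n)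
     \<and> real (g_ff q r n) \<le> real (r - 1) * real q ^ nat \<lceil>real ((r - 2) * n) / real (r - 1)\<rceil>)"
proof (intro exI[of _ "1/8"] conjI allI impI)
  fix n :: nat assume "n \<ge> 1"
  show "1/8 * (real q / (real ((q - 1) * (r - 1) + 1)) powr (1 / real (r - 1))) ^ n \<le> real (g_ff q r n)"
    using lower[OF assms] .
  obtain F where F: "F \<subseteq> cube q n" "\<not> contains_focal n r F" "g_ff q r n = card F"
    using g_ff_props(1)[of r q n] assms by auto
  have "card F \<le> (r - 1) * q ^ (n - n div (r - 1))" using upper[of r q F n] F assms by simp
  also have "\<dots> \<le> (r - 1) * q ^ nat \<lceil>real ((r - 2) * n) / real (r - 1)\<rceil>"
    using ceil_bound[OF assms(2), of n] assms by (intro mult_left_mono power_increasing) auto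
  finally have "g_ff q r n \<le> (r - 1) * q ^ nat \<lceil>real ((r - 2) * n) / real (r - 1)\<rceil>" using F by simp
  then show "real (g_ff q r n) \<le> real (r - 1) * real q ^ nat \<lceil>real ((r - 2) * n) / real (r - 1)\<rceil>"
    by (metis of_nat_le_iff of_nat_mult of_nat_power)
qed simp

end
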